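(* Let $k\ge 1$ be an integer and let $G$ be a $k$-regular graph. Then $G$ has a $k$-conversion set of size $k$ (that is, $c_k(G)=k$) if and only if $G=H\vee\overline{K_{k-t}}$, where $H$ is a $t$-regular graph of order $k$ and $0\le t<k$.
   Context: For a graph $G=(V,E)$, a positive integer $k$ and a set $S_0\subseteq V$, the irreversible $k$-threshold conversion process is defined by: for $t=1,2,\dots$, $S_t$ is obtained from $S_{t-1}$ by adjoining all vertices having at least $k$ neighbours in $S_{t-1}$. The set $S_0$ is a $k$-conversion set of $G$ if $S_t=V(G)$ for some $t\ge 0$. The $k$-conversion number $c_k(G)$ is the minimum size of a $k$-conversion set of $G$. For graphs $G,H$, $G\vee H$ denotes the join (disjoint union plus all edges between $G$ and $H$), and $\overline{K_m}$ is the edgeless graph on $m$ vertices. *)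

theory Defs
  imports Main
begin

definition graph :: "'a set \<Rightarrow> ('a \<Rightarrow> 'a \<Rightarrow> bool) \<Rightarrow> bool" where
  "graph V E \<longleftrightarrow> finite V \<and> (\<forall>u v. E u v \<longrightarrow> u \<in> V \<and> v \<in> V)
     \<and> (\<forall>u v. E u v \<longrightarrow> E v u) \<and> (\<forall>v. \<not> E v v)"

definition degree :: "'a set \<Rightarrow> ('a \<Rightarrow> 'a \<Rightarrow> bool) \<Rightarrow> 'a \<Rightarrow> nat" where
  "degree V E v = card {u \<in> V. E v u}"

definition regular :: "'a set \<Rightarrow> ('a \<Rightarrow> 'a \<Rightarrow> bool) \<Rightarrow> nat \<Rightarrow> bool" where
  "regular V E r \<longleftrightarrow> (\<forall>v \<in> V. degree V E v = r)"

definition conv_step :: "'a set \<Rightarrow> ('a \<Rightarrow> 'a \<Rightarrow> bool) \<Rightarrow> nat \<Rightarrow> 'a set \<Rightarrow> 'a set" where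
  "conv_step V E k S = S \<union> {v \<in> V. k \<le> card {u \<in> S. E v u}}"

definition conversion_set :: "'a set \<Rightarrow> ('a \<Rightarrow> 'a \<Rightarrow> bool) \<Rightarrow> nat \<Rightarrow> 'a set \<Rightarrow> bool" where
  "conversion_set V E k S0 \<longleftrightarrow> S0 \<subseteq> V \<and> (\<exists>t. (conv_step V E k ^^ t) S0 = V)"

definition conversion_number :: "'a set \<Rightarrow> ('a \<Rightarrow> 'a \<Rightarrow> bool) \<Rightarrow> nat \<Rightarrow> nat" where
  "conversion_number V E k = (LEAST n. \<exists>S. conversion_set V E k S \<and> card S = n)"

definition join_V :: "'a set \<Rightarrow> 'b set \<Rightarrow> ('a + 'b) set" where
  "join_V V1 V2 = Inl ` V1 \<union> Inr ` V2"

fun join_E :: "'a set \<Rightarrow> ('a \<Rightarrow> 'a \<Rightarrow> bool) \<Rightarrow> 'b set \<Rightarrow> ('b \<Rightarrow> 'b \<Rightarrow> bool)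
    \<Rightarrow> ('a + 'b) \<Rightarrow> ('a + 'b) \<Rightarrow> bool" where
  "join_E V1 E1 V2 E2 (Inl a) (Inl b) = E1 a b"
| "join_E V1 E1 V2 E2 (Inr a) (Inr b) = E2 a b"
| "join_E V1 E1 V2 E2 (Inl a) (Inr b) = (a \<in> V1 \<and> b \<in> V2)"
| "join_E V1 E1 V2 E2 (Inr a) (Inl b) = (a \<in> V2 \<and> b \<in> V1)"

definition empty_V :: "nat \<Rightarrow> nat set" where "empty_V m = {0..<m}"
definition empty_E :: "nat \<Rightarrow> nat \<Rightarrow> bool" where "empty_E u v = False"

definition graph_iso :: "'a set \<Rightarrow> ('a \<Rightarrow> 'a \<Rightarrow> bool) \<Rightarrow> 'b set \<Rightarrow> ('b \<Rightarrow> 'b \<Rightarrow> bool) \<Rightarrow> bool" where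
  "graph_iso V1 E1 V2 E2 \<longleftrightarrow> (\<exists>f. bij_betw f V1 V2 \<and>
     (\<forall>u \<in> V1. \<forall>v \<in> V1. E1 u v \<longleftrightarrow> E2 (f u) (f v)))"

end

theory Submission
  imports Defs
begin

lemma nbr_finite: "graph V E \<Longrightarrow> finite {u \<in> A. E v u}"
  unfolding graph_def by (metis (no_types, lifting) mem_Collect_eq rev_finite_subset subsetI)

lemma step_mono:
  assumes "graph V E" "A \<subseteq> B"
  shows "conv_step V E k A \<subseteq> conv_step V E k B"
proof -
  have "\<And>v. card {u \<in> A. E v u} \<le> card {u \<in> B. E v u}"
    using assms by (intro card_mono) (auto intro: nbr_finite)
  then show ?thesis using assms unfolding conv_step_def by (auto intro: le_trans)
qed

lemma small_fixed:
  assumes "graph V E" "S \<subseteq> V" "card S < k"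
  shows "(conv_step V E k ^^ n) S = S"
proof (induction n)
  case (Suc n)
  have fin: "finite S" using assms unfolding graph_def by (meson rev_finite_subset)
  have "\<And>v. card {u \<in> S. E v u} \<le> card S" using fin by (intro card_mono) auto
  have "\<And>v. \<not> k \<le> card {u \<in> S. E v u}"
    using \<open>\<And>v. card {u \<in> S. E v u} \<le> card S\<close> assms(3) by (meson le_trans not_le)
  hence "conv_step V E k S = S" unfolding conv_step_def by auto
  then show ?case using Suc by simp
qed simp

lemma card_gt:
  assumes "graph V E" "regular V E k" "v \<in> V"
  shows "k < card V"
proof -
  have fin: "finite V" using assms unfolding graph_def by auto
  have "{u \<in> V. E v u} \<subseteq> V - {v}" using assms unfolding graph_def by auto
  hence "card {u \<in> V. E v u} \<le> card (V - {v})" using fin by (intro card_mono) auto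
  also have "\<dots> = card V - 1" using assms fin by simp
  finally show ?thesis using assms fin unfolding regular_def degree_def
    by (metis One_nat_def card_gt_0_iff diff_less empty_iff le_less_trans zero_less_one)
qed

lemma fwd:
  fixes V :: "'a set"
  assumes k1: "k \<ge> 1" and g: "graph V E" and r: "regular V E k" and SV: "S \<subseteq> V"
    and cS: "card S = k" and conv: "(conv_step V E k ^^ n) S = V"
  shows "\<exists>t (HV :: 'a set) HE. t < k \<and> graph HV HE \<and> regular HV HE t \<and> card HV = k \<and>
       graph_iso V E (join_V HV (empty_V (k - t))) (join_E HV HE (empty_V (k - t)) empty_E)"
proof -
  have finV: "finite V" using g unfolding graph_def by auto
  have inV: "\<And>u v. E u v \<Longrightarrow> u \<in> V \<and> v \<in> V" and sym: "\<And>u v. E u v \<Longrightarrow> E v u"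
    and irr: "\<And>v. \<not> E v v" using g unfolding graph_def by auto
  have deg: "\<And>v. v \<in> V \<Longrightarrow> card {u \<in> V. E v u} = k" using r unfolding regular_def degree_def by auto
  have finS: "finite S" using SV finV by (meson rev_finite_subset)
  define X where "X = {v \<in> V - S. {u \<in> V. E v u} = S}"
  have XV: "X \<subseteq> V" unfolding X_def by auto
  have closed: "conv_step V E k (S \<union> X) = S \<union> X"
  proof -
    have "v \<in> S \<union> X" if v: "v \<in> V" and kk: "k \<le> card {u \<in> S \<union> X. E v u}" for v
    proof (rule ccontr)
      assume nv: "v \<notin> S \<union> X"
      have sub: "{u \<in> S \<union> X. E v u} \<subseteq> {u \<in> V. E v u}" using SV XV by auto
      have "card {u \<in> S \<union> X. E v u} = card {u \<in> V. E v u}"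
        using card_mono[OF _ sub] kk deg[OF v] finV by (simp add: le_antisym)
      hence eq1: "{u \<in> S \<union> X. E v u} = {u \<in> V. E v u}"
        using sub finV by (metis (no_types, lifting) card_subset_eq finite_subset mem_Collect_eq subsetI)
      have noX: "\<And>x. x \<in> X \<Longrightarrow> \<not> E v x"
      proof
        fix x assume x: "x \<in> X" "E v x"
        hence "v \<in> {u \<in> V. E x u}" using sym inV by auto
        thus False using x nv unfolding X_def by auto
      qed
      have eq2: "{u \<in> V. E v u} \<subseteq> S" using eq1 noX by blast
      have "card {u \<in> V. E v u} = card S" using deg[OF v] cS by simp
      hence "{u \<in> V. E v u} = S" using eq2 finS by (simp add: card_subset_eq)
      thus False using nv v unfolding X_def by auto
    qed
    thus ?thesis unfolding conv_step_def by auto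
  qed
  have "(conv_step V E k ^^ j) S \<subseteq> S \<union> X" for j
  proof (induction j)
    case (Suc j)
    have "conv_step V E k ((conv_step V E k ^^ j) S) \<subseteq> conv_step V E k (S \<union> X)"
      by (rule step_mono[OF g Suc])
    then show ?case using closed by simp
  qed simp
  hence VSX: "V = S \<union> X" using conv SV XV by (metis le_supI subset_antisym)
  obtain s where s: "s \<in> S" using cS k1 by fastforce
  have "k < card V" using card_gt[OF g r] s SV by auto
  hence Xne: "X \<noteq> {}" using VSX cS by auto
  have finX: "finite X" using XV finV by (meson rev_finite_subset)
  define m where "m = card X"
  have m1: "m \<ge> 1" using Xne finX m_def by (simp add: Suc_le_eq card_gt_0_iff)
  have XS: "X \<inter> S = {}" unfolding X_def by auto
  have XN: "\<And>x u. x \<in> X \<Longrightarrow> E x u \<longleftrightarrow> u \<in> S" unfolding X_def using inV by blast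
  have Sdeg: "card {u \<in> S. E s u} = k - m \<and> m \<le> k" if s: "s \<in> S" for s
  proof -
    have "{u \<in> V. E s u} = {u \<in> S. E s u} \<union> X"
      using VSX XN sym s by blast
    hence "card {u \<in> V. E s u} = card {u \<in> S. E s u} + m"
    proof -
      have "card ({u \<in> S. E s u} \<union> X) = card {u \<in> S. E s u} + card X"
        using finS finX XS by (intro card_Un_disjoint) auto
      thus ?thesis using \<open>{u \<in> V. E s u} = {u \<in> S. E s u} \<union> X\<close> m_def by simp
    qed
    thus ?thesis using deg s SV by auto
  qed
  hence mk: "m \<le> k" using s by blast
  define HE where "HE = (\<lambda>u v. E u v \<and> u \<in> S \<and> v \<in> S)"
  obtain h where h: "bij_betw h X {0..<m}" using ex_bij_betw_finite_nat[OF finX] m_def by blast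
  define f where "f = (\<lambda>v. if v \<in> S then Inl v else Inr (h v))"
  have b1: "bij_betw f S (Inl ` S)"
    by (rule bij_betw_cong[THEN iffD1, of _ Inl]) (auto simp: f_def bij_betw_def)
  have "bij_betw (Inr \<circ> h) X (Inr ` {0..<m})"
    using h by (rule bij_betw_trans) (auto simp: bij_betw_def)
  hence b2: "bij_betw f X (Inr ` {0..<m})"
    by (rule bij_betw_cong[THEN iffD1, rotated]) (use XS in \<open>auto simp: f_def\<close>)
  have bij: "bij_betw f V (join_V S (empty_V m))"
    unfolding VSX join_V_def empty_V_def by (rule bij_betw_combine[OF b1 b2]) auto
  have hX: "\<And>x. x \<in> X \<Longrightarrow> h x \<in> {0..<m}" using h by (auto simp: bij_betw_def)
  have edges: "E u v \<longleftrightarrow> join_E S HE (empty_V m) empty_E (f u) (f v)" if "u \<in> V" "v \<in> V" for u v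
  proof -
    have "u \<in> S \<or> u \<in> X" "v \<in> S \<or> v \<in> X" using that VSX by auto
    thus ?thesis using XN sym XS hX
      by (auto simp: f_def HE_def empty_E_def empty_V_def)
  qed
  have "graph S HE" using finS sym irr unfolding graph_def HE_def by auto
  moreover have "regular S HE (k - m)" unfolding regular_def degree_def HE_def
    using Sdeg by (simp add: conj_commute cong: conj_cong)
  moreover have "k - (k - m) = m" using mk by simp
  moreover have "k - m < k" using m1 mk by simp
  ultimately show ?thesis using bij edges cS unfolding graph_iso_def
    by (intro exI[of _ "k - m"] exI[of _ S] exI[of _ HE]) auto
qed

lemma bwd:
  assumes k1: "k \<ge> 1" and g: "graph V E" and r: "regular V E k"
    and tk: "t < k" and cH: "card HV = k"
    and iso: "graph_iso V E (join_V HV (empty_V (k - t))) (join_E HV HE (empty_V (k - t)) empty_E)"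
  shows "conversion_number V E k = k"
proof -
  define m where "m = k - t"
  have m1: "m \<ge> 1" using tk m_def by simp
  obtain f where bf: "bij_betw f V (join_V HV (empty_V m))"
    and ef: "\<And>u v. u \<in> V \<Longrightarrow> v \<in> V \<Longrightarrow> E u v \<longleftrightarrow> join_E HV HE (empty_V m) empty_E (f u) (f v)"
    using iso unfolding graph_iso_def m_def by blast
  have finV: "finite V" using g unfolding graph_def by auto
  have finH: "finite HV" using cH k1 card.infinite by fastforce
  have "Inr 0 \<in> join_V HV (empty_V m)" using m1 by (auto simp: join_V_def empty_V_def)
  then obtain v0 where "v0 \<in> V" using bf by (auto simp: bij_betw_def)
  hence cV: "k < card V" using card_gt[OF g r] by auto
  define S where "S = {v \<in> V. f v \<in> Inl ` HV}"
  have fS: "f ` S = Inl ` HV"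
  proof
    show "f ` S \<subseteq> Inl ` HV" unfolding S_def by auto
    show "Inl ` HV \<subseteq> f ` S"
    proof
      fix y assume y: "y \<in> (Inl ` HV :: (_ + nat) set)"
      then have "y \<in> f ` V" using bf unfolding bij_betw_def join_V_def by auto
      then obtain v where "v \<in> V" "y = f v" by auto
      thus "y \<in> f ` S" using y unfolding S_def by auto
    qed
  qed
  have "inj_on f S" using bf unfolding S_def bij_betw_def by (auto intro: inj_on_subset)
  hence cS: "card S = k" using fS cH by (metis card_image inj_Inl inj_on_subset subset_UNIV)
  have SV: "S \<subseteq> V" unfolding S_def by auto
  have "conv_step V E k S = V"
  proof -
    have "v \<in> conv_step V E k S" if v: "v \<in> V" for v
    proof (cases "v \<in> S")
      case False
      have "f v \<in> f ` V" using v by auto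
      hence "f v \<in> Inr ` empty_V m" using False v bf unfolding S_def bij_betw_def join_V_def by auto
      then obtain j where j: "f v = Inr j" "j \<in> empty_V m" by auto
      have "{u \<in> S. E v u} = S"
      proof -
        have "E v u" if uS: "u \<in> S" for u
        proof -
          obtain a where "a \<in> HV" "f u = Inl a" using uS unfolding S_def by auto
          thus ?thesis using ef[OF v] uS SV j by auto
        qed
        thus ?thesis by auto
      qed
      thus ?thesis using v cS unfolding conv_step_def by auto
    qed (auto simp: conv_step_def)
    thus ?thesis using SV unfolding conv_step_def by auto
  qed
  hence csS: "conversion_set V E k S" unfolding conversion_set_def using SV
    by (intro conjI exI[of _ 1]) auto
  show ?thesis unfolding conversion_number_def
  proof (rule Least_equality)
    show "\<exists>S. conversion_set V E k S \<and> card S = k" using csS cS by blast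
  next
    fix n assume "\<exists>S. conversion_set V E k S \<and> card S = n"
    then obtain S' j where S': "S' \<subseteq> V" "card S' = n" "(conv_step V E k ^^ j) S' = V"
      unfolding conversion_set_def by blast
    show "k \<le> n"
    proof (rule ccontr)
      assume "\<not> k \<le> n"
      hence "(conv_step V E k ^^ j) S' = S'" using small_fixed[OF g S'(1)] S' by simp
      thus False using S' cV \<open>\<not> k \<le> n\<close> by simp
    qed
  qed
qed

theorem proposition2p2:
  fixes V :: "'a set" and E :: "'a \<Rightarrow> 'a \<Rightarrow> bool" and k :: nat
  assumes "k \<ge> 1" and "graph V E" and "regular V E k"
  shows "conversion_number V E k = k \<longleftrightarrow>
    (\<exists>t (HV :: 'a set) HE. t < k \<and> graph HV HE \<and> regular HV HE t \<and> card HV = k \<and>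
       graph_iso V E (join_V HV (empty_V (k - t))) (join_E HV HE (empty_V (k - t)) empty_E))"
proof
  assume cn: "conversion_number V E k = k"
  have ex: "\<exists>S. conversion_set V E k S \<and> card S = card V"
    unfolding conversion_set_def by (intro exI[of _ V] conjI exI[of _ 0]) auto
  have "V \<noteq> {}"
  proof
    assume "V = {}"
    hence "conversion_set V E k {}" unfolding conversion_set_def by (intro conjI exI[of _ 0]) auto
    hence "conversion_number V E k \<le> 0" unfolding conversion_number_def
      by (intro Least_le) auto
    thus False using cn assms(1) by simp
  qed
  have "\<exists>S. conversion_set V E k S \<and> card S = conversion_number V E k"
    unfolding conversion_number_def by (rule LeastI_ex) (use ex in blast)
  then obtain S j where "S \<subseteq> V" "card S = k" "(conv_step V E k ^^ j) S = V"
    using cn unfolding conversion_set_def by auto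
  thus "\<exists>t (HV :: 'a set) HE. t < k \<and> graph HV HE \<and> regular HV HE t \<and> card HV = k \<and>
       graph_iso V E (join_V HV (empty_V (k - t))) (join_E HV HE (empty_V (k - t)) empty_E)"
    using fwd[OF assms] by blast
next
  assume "\<exists>t (HV :: 'a set) HE. t < k \<and> graph HV HE \<and> regular HV HE t \<and> card HV = k \<and>
       graph_iso V E (join_V HV (empty_V (k - t))) (join_E HV HE (empty_V (k - t)) empty_E)"
  thus "conversion_number V E k = k" using bwd[OF assms] by blast
qed

end
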